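(* Let $G$ be a group, let $K$ be an uncountable algebraically closed field, and let $A$ be an affine algebraic set over $K$. Then every bijective algebraic cellular automaton $\tau\colon A^G\to A^G$ is reversible, i.e., its inverse map $\tau^{-1}\colon A^G\to A^G$ is also a cellular automaton.
   Context: For a group $G$ and a set $A$, $A^G$ is the set of maps $x\colon G\to A$, with the $G$-shift $(gx)(h)=x(g^{-1}h)$. A cellular automaton is a map $\tau\colon A^G\to A^G$ for which there exist a finite subset $M\subset G$ (memory set) and a map $\mu\colon A^M\to A$ (local defining map) with $\tau(x)(g)=\mu((g^{-1}x)|_M)$ for all $x\in A^G$, $g\in G$. A cellular automaton is reversible if it is bijective and its inverse is a cellular automaton. An affine algebraic set over a field $K$ is the common zero set in some $K^m$ of a set of polynomials; a map between affine algebraic sets is regular if it is the restriction of a polynomial map. A cellular automaton $\tau\colon A^G\to A^G$ with $A$ an affine algebraic set over $K$ is algebraic if for some (equivalently any) memory set $M$ the local defining map $\mu\colon A^M\to A$ is regular ($A^M$ being viewed as an affine algebraic set). *)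

theory Defs
  imports Main "HOL-Library.FuncSet" "HOL-Library.Countable_Set"
    "HOL-Computational_Algebra.Polynomial"
begin

inductive_set polyfuns :: "'x set \<Rightarrow> (('x \<Rightarrow> 'k::field) \<Rightarrow> 'k) set"
  for V :: "'x set" where
  pf_const: "(\<lambda>_. c) \<in> polyfuns V"
| pf_var: "v \<in> V \<Longrightarrow> (\<lambda>x. x v) \<in> polyfuns V"
| pf_add: "p \<in> polyfuns V \<Longrightarrow> q \<in> polyfuns V \<Longrightarrow> (\<lambda>x. p x + q x) \<in> polyfuns V"
| pf_mult: "p \<in> polyfuns V \<Longrightarrow> q \<in> polyfuns V \<Longrightarrow> (\<lambda>x. p x * q x) \<in> polyfuns V"

definition alg_closed_field :: "'k::field itself \<Rightarrow> bool" where
  "alg_closed_field _ \<longleftrightarrow> (\<forall>p :: 'k poly. degree p > 0 \<longrightarrow> (\<exists>z. poly p z = 0))"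

text \<open>Affine algebraic set in K^m, points of K^m being maps 'v \<Rightarrow> 'k, 'v a finite
  index type with CARD('v) = m.\<close>
definition affine_algebraic_set :: "('v::finite \<Rightarrow> 'k::field) set \<Rightarrow> bool" where
  "affine_algebraic_set A \<longleftrightarrow>
     (\<exists>S. S \<subseteq> polyfuns UNIV \<and> A = {x. \<forall>p\<in>S. p x = 0})"

text \<open>Configurations A^G; the group G is written additively: 'g :: group_add
  (not necessarily commutative).\<close>
definition configs :: "'a set \<Rightarrow> ('g \<Rightarrow> 'a) set" where
  "configs A = {x. \<forall>g. x g \<in> A}"

definition shift :: "'g::group_add \<Rightarrow> ('g \<Rightarrow> 'a) \<Rightarrow> ('g \<Rightarrow> 'a)" where
  "shift g x = (\<lambda>h. x (- g + h))"

definition ca_local :: "'a set \<Rightarrow> 'g::group_add set \<Rightarrow> (('g \<Rightarrow> 'a) \<Rightarrow> 'a)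
    \<Rightarrow> (('g \<Rightarrow> 'a) \<Rightarrow> ('g \<Rightarrow> 'a)) \<Rightarrow> bool" where
  "ca_local A M \<mu> \<tau> \<longleftrightarrow> finite M \<and> (\<forall>p \<in> M \<rightarrow>\<^sub>E A. \<mu> p \<in> A) \<and>
     (\<forall>x \<in> configs A. \<forall>g. \<tau> x g = \<mu> (restrict (shift (- g) x) M))"

definition cellular_automaton :: "'a set \<Rightarrow> (('g::group_add \<Rightarrow> 'a) \<Rightarrow> ('g \<Rightarrow> 'a)) \<Rightarrow> bool" where
  "cellular_automaton A \<tau> \<longleftrightarrow> (\<exists>M \<mu>. ca_local A M \<mu> \<tau>)"

text \<open>Regular map A^M \<rightarrow> A: restriction of a polynomial map K^(M\<times>m) \<rightarrow> K^m.\<close>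
definition regular_local :: "('v::finite \<Rightarrow> 'k::field) set \<Rightarrow> 'g set
    \<Rightarrow> (('g \<Rightarrow> 'v \<Rightarrow> 'k) \<Rightarrow> ('v \<Rightarrow> 'k)) \<Rightarrow> bool" where
  "regular_local A M \<mu> \<longleftrightarrow> (\<forall>v. \<exists>P \<in> polyfuns (M \<times> UNIV).
      \<forall>p \<in> M \<rightarrow>\<^sub>E A. \<mu> p v = P (\<lambda>(h, w). p h w))"

definition algebraic_ca :: "('v::finite \<Rightarrow> 'k::field) set
    \<Rightarrow> (('g::group_add \<Rightarrow> 'v \<Rightarrow> 'k) \<Rightarrow> ('g \<Rightarrow> 'v \<Rightarrow> 'k)) \<Rightarrow> bool" where
  "algebraic_ca A \<tau> \<longleftrightarrow> (\<exists>M \<mu>. ca_local A M \<mu> \<tau> \<and> regular_local A M \<mu>)"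

definition reversible_ca :: "'a set \<Rightarrow> (('g::group_add \<Rightarrow> 'a) \<Rightarrow> ('g \<Rightarrow> 'a)) \<Rightarrow> bool" where
  "reversible_ca A \<tau> \<longleftrightarrow> bij_betw \<tau> (configs A) (configs A) \<and>
     cellular_automaton A (the_inv_into (configs A) \<tau>)"

end

theory Submission imports Defs "HOL-Library.Function_Algebras"
begin


declare plus_fun_apply[simp del] times_fun_apply[simp del] zero_fun_apply[simp del]
  one_fun_apply[simp del] uminus_apply[simp del] minus_apply[simp del]

definition cst :: "'k \<Rightarrow> ('x \<Rightarrow> 'k) \<Rightarrow> 'k" where "cst c = (\<lambda>_. c)"
definition var :: "'x \<Rightarrow> ('x \<Rightarrow> 'k) \<Rightarrow> 'k" where "var v = (\<lambda>x. x v)"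

lemma cst_apply: "cst c x = c" by (simp add: cst_def)
lemma var_apply: "var v x = x v" by (simp add: var_def)
lemmas fapp = plus_fun_apply times_fun_apply zero_fun_apply one_fun_apply uminus_apply minus_apply cst_apply var_apply

lemma fun_sum_apply: "(\<Sum>a\<in>A. f a) x = (\<Sum>a\<in>A. f a x)"
  by (induction A rule: infinite_finite_induct) (auto simp: fapp)

lemma fun_prod_apply: "(\<Prod>a\<in>A. f a) x = (\<Prod>a\<in>A. f a x)"
  by (induction A rule: infinite_finite_induct) (auto simp: fapp)

context fixes V :: "'x set" begin

lemma pf_cst[simp,intro]: "cst c \<in> (polyfuns V :: (('x \<Rightarrow> 'k::field) \<Rightarrow> 'k) set)"
  unfolding cst_def by (rule pf_const)
lemma pf_var'[intro]: "v \<in> V \<Longrightarrow> (var v :: ('x \<Rightarrow> 'k::field) \<Rightarrow> 'k) \<in> polyfuns V"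
  unfolding var_def by (rule pf_var)
lemma pf_add'[intro]: "p \<in> polyfuns V \<Longrightarrow> q \<in> polyfuns V \<Longrightarrow> p + q \<in> polyfuns V"
  using pf_add[of p V q] by (simp add: plus_fun_def)
lemma pf_mult'[intro]: "p \<in> polyfuns V \<Longrightarrow> q \<in> polyfuns V \<Longrightarrow> p * q \<in> polyfuns V"
  using pf_mult[of p V q] by (simp add: times_fun_def)
lemma pf_one[simp,intro]: "(1::('x \<Rightarrow> 'k::field) \<Rightarrow> 'k) \<in> polyfuns V"
  using pf_cst[of 1] by (simp add: cst_def one_fun_def)
lemma pf_zero[simp,intro]: "(0::('x \<Rightarrow> 'k::field) \<Rightarrow> 'k) \<in> polyfuns V"
  using pf_cst[of 0] by (simp add: cst_def zero_fun_def)
lemma pf_neg[intro]: "p \<in> polyfuns V \<Longrightarrow> - p \<in> polyfuns V"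
proof -
  assume "p \<in> polyfuns V"
  then have "cst (-1) * p \<in> polyfuns V" by auto
  moreover have "cst (-1) * p = - p" by (auto simp: fun_eq_iff fapp)
  ultimately show ?thesis by simp
qed
lemma pf_diff[intro]: "p \<in> polyfuns V \<Longrightarrow> q \<in> polyfuns V \<Longrightarrow> p - q \<in> polyfuns V"
  using pf_add'[of p "-q"] pf_neg[of q] by simp
lemma pf_sum[intro]: "(\<And>a. a \<in> A \<Longrightarrow> f a \<in> polyfuns V) \<Longrightarrow> sum f A \<in> polyfuns V"
  by (induction A rule: infinite_finite_induct) auto
lemma pf_prod[intro]: "(\<And>a. a \<in> A \<Longrightarrow> f a \<in> polyfuns V) \<Longrightarrow> prod f A \<in> polyfuns V"
  by (induction A rule: infinite_finite_induct) auto

lemma pf_poly: "v \<in> V \<Longrightarrow> (\<lambda>x. poly q (x v)) \<in> (polyfuns V :: (('x \<Rightarrow> 'k::field) \<Rightarrow> 'k) set)"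
proof (induction q)
  case 0 then show ?case using pf_zero by (simp add: zero_fun_def)
next
  case (pCons a p)
  then have "cst a + var v * (\<lambda>x. poly p (x v)) \<in> (polyfuns V :: (('x \<Rightarrow> 'k::field) \<Rightarrow> 'k) set)" by auto
  moreover have "cst a + var v * (\<lambda>x. poly p (x v)) = (\<lambda>x. poly (pCons a p) (x v))"
    by (auto simp: fun_eq_iff fapp)
  ultimately show ?case by simp
qed

inductive_set idl :: "(('x \<Rightarrow> 'k::field) \<Rightarrow> 'k) set \<Rightarrow> (('x \<Rightarrow> 'k) \<Rightarrow> 'k) set" for T where
  idl_0: "0 \<in> idl T"
| idl_gen: "r \<in> polyfuns V \<Longrightarrow> t \<in> T \<Longrightarrow> r * t \<in> idl T"
| idl_add: "a \<in> idl T \<Longrightarrow> b \<in> idl T \<Longrightarrow> a + b \<in> idl T"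

lemma idl_mult: "a \<in> idl T \<Longrightarrow> r \<in> polyfuns V \<Longrightarrow> r * a \<in> idl T"
proof (induction a rule: idl.induct)
  case idl_0 then show ?case by (metis idl.idl_0 mult_zero_right)
next
  case (idl_gen r' t) then show ?case using idl.idl_gen[of "r*r'" t T] by (auto simp: mult.assoc)
next
  case (idl_add a b) then show ?case using idl.idl_add by (auto simp: distrib_left)
qed

lemma idl_in: "t \<in> T \<Longrightarrow> t \<in> idl T"
  using idl_gen[of 1 t T] by simp

lemma idl_neg: "a \<in> idl T \<Longrightarrow> - a \<in> idl T"
proof -
  assume "a \<in> idl T"
  then have "cst (-1) * a \<in> idl T" by (rule idl_mult) auto
  moreover have "cst (-1) * a = - a" by (auto simp: fun_eq_iff fapp)
  ultimately show ?thesis by simp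
qed

lemma idl_diff: "a \<in> idl T \<Longrightarrow> b \<in> idl T \<Longrightarrow> a - b \<in> idl T"
  using idl_add[of a T "-b"] idl_neg[of b T] by simp

lemma idl_sum: "(\<And>a. a \<in> A \<Longrightarrow> f a \<in> idl T) \<Longrightarrow> sum f A \<in> idl T"
  by (induction A rule: infinite_finite_induct) (auto intro: idl_0 idl_add)

lemma idl_mono: "T \<subseteq> T' \<Longrightarrow> idl T \<subseteq> idl T'"
proof
  fix a assume TT: "T \<subseteq> T'" assume "a \<in> idl T" then show "a \<in> idl T'"
    by (induction a rule: idl.induct) (use TT in \<open>auto intro: idl.intros\<close>)
qed

lemma idl_insert: "a \<in> idl (insert g T) \<Longrightarrow> \<exists>i\<in>idl T. \<exists>r\<in>polyfuns V. a = i + r * g"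
proof (induction a rule: idl.induct)
  case idl_0 then show ?case by (intro bexI[of _ 0]) (auto intro: idl.intros)
next
  case (idl_gen r t)
  show ?case
  proof (cases "t = g")
    case True then show ?thesis using idl_gen by (intro bexI[of _ 0] bexI[of _ r]) (auto intro: idl.intros)
  next
    case False then show ?thesis using idl_gen by (intro bexI[of _ "r*t"] bexI[of _ 0]) (auto intro: idl.intros)
  qed
next
  case (idl_add a b)
  then obtain i1 r1 i2 r2 where "i1 \<in> idl T" "r1 \<in> polyfuns V" "a = i1 + r1 * g"
    "i2 \<in> idl T" "r2 \<in> polyfuns V" "b = i2 + r2 * g" by blast
  then show ?case by (intro bexI[of _ "i1+i2"] bexI[of _ "r1+r2"]) (auto intro: idl.intros simp: algebra_simps)
qed

lemma idl_finite: "a \<in> idl T \<Longrightarrow> \<exists>F. finite F \<and> F \<subseteq> T \<and> (\<forall>c. (\<forall>t\<in>F. t c = 0) \<longrightarrow> a c = 0)"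
proof (induction a rule: idl.induct)
  case idl_0 then show ?case by (intro exI[of _ "{}"]) (auto simp: fapp)
next
  case (idl_gen r t) then show ?case by (intro exI[of _ "{t}"]) (auto simp: fapp)
next
  case (idl_add a b)
  then obtain F1 F2 where "finite F1 \<and> F1 \<subseteq> T \<and> (\<forall>c. (\<forall>t\<in>F1. t c = 0) \<longrightarrow> a c = 0)"
    "finite F2 \<and> F2 \<subseteq> T \<and> (\<forall>c. (\<forall>t\<in>F2. t c = 0) \<longrightarrow> b c = 0)" by blast
  then show ?case by (intro exI[of _ "F1 \<union> F2"]) (auto simp: fapp)
qed

lemma idl_cst: "cst c \<in> idl T \<Longrightarrow> c \<noteq> 0 \<Longrightarrow> 1 \<in> idl T"
  using idl_mult[of "cst c" T "cst (1/c)"] by (simp add: fun_eq_iff fapp times_fun_def one_fun_def)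

lemma taylor:
  assumes "p \<in> polyfuns V"
  shows "\<exists>W. finite W \<and> W \<subseteq> V \<and> (\<forall>c. p - cst (p c) \<in> idl ((\<lambda>w. var w - cst (c w)) ` W))"
  using assms
proof (induction p rule: polyfuns.induct)
  case (pf_const c)
  have 0: "(\<lambda>_. c) - cst c = 0" by (auto simp: fun_eq_iff fapp)
  have "\<forall>x. (\<lambda>_. c) - cst ((\<lambda>_. c) x) \<in> idl ((\<lambda>w. var w - cst (x w)) ` {})"
    unfolding 0 by (simp add: idl_0)
  then show ?case by blast
next
  case (pf_var v)
  have "(\<lambda>x. x v) - cst ((\<lambda>x. x v) c) \<in> idl ((\<lambda>w. var w - cst (c w)) ` {v})" for c
  proof -
    have "var v - cst (c v) \<in> (\<lambda>w. var w - cst (c w)) ` {v}" by blast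
    then have "var v - cst (c v) \<in> idl ((\<lambda>w. var w - cst (c w)) ` {v})" by (rule idl_in)
    then show ?thesis by (simp add: var_def)
  qed
  then show ?case using pf_var by blast
next
  case (pf_add p q)
  then obtain W1 W2 where W1: "finite W1 \<and> W1 \<subseteq> V \<and> (\<forall>c. p - cst (p c) \<in> idl ((\<lambda>w. var w - cst (c w)) ` W1))"
    and W2: "finite W2 \<and> W2 \<subseteq> V \<and> (\<forall>c. q - cst (q c) \<in> idl ((\<lambda>w. var w - cst (c w)) ` W2))" by blast
  show ?case
  proof (intro exI[of _ "W1 \<union> W2"] conjI allI)
    fix c
    have "p - cst (p c) \<in> idl ((\<lambda>w. var w - cst (c w)) ` (W1 \<union> W2))"
      using idl_mono[of "(\<lambda>w. var w - cst (c w)) ` W1" "(\<lambda>w. var w - cst (c w)) ` (W1 \<union> W2)"] W1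
      by (meson image_mono subsetD sup_ge1 sup_ge2)
    moreover have "q - cst (q c) \<in> idl ((\<lambda>w. var w - cst (c w)) ` (W1 \<union> W2))"
      using idl_mono[of "(\<lambda>w. var w - cst (c w)) ` W2" "(\<lambda>w. var w - cst (c w)) ` (W1 \<union> W2)"] W2
      by (meson image_mono subsetD sup_ge1 sup_ge2)
    ultimately have "(p - cst (p c)) + (q - cst (q c)) \<in> idl ((\<lambda>w. var w - cst (c w)) ` (W1 \<union> W2))"
      by (rule idl_add)
    moreover have "(p - cst (p c)) + (q - cst (q c)) = (\<lambda>x. p x + q x) - cst ((\<lambda>x. p x + q x) c)"
      by (auto simp: fun_eq_iff fapp)
    ultimately show "(\<lambda>x. p x + q x) - cst ((\<lambda>x. p x + q x) c) \<in> idl ((\<lambda>w. var w - cst (c w)) ` (W1 \<union> W2))"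
      by metis
  qed (use W1 W2 in blast)+
next
  case (pf_mult p q)
  then obtain W1 W2 where W1: "finite W1 \<and> W1 \<subseteq> V \<and> (\<forall>c. p - cst (p c) \<in> idl ((\<lambda>w. var w - cst (c w)) ` W1))"
    and W2: "finite W2 \<and> W2 \<subseteq> V \<and> (\<forall>c. q - cst (q c) \<in> idl ((\<lambda>w. var w - cst (c w)) ` W2))" by blast
  show ?case
  proof (intro exI[of _ "W1 \<union> W2"] conjI allI)
    fix c
    have "p - cst (p c) \<in> idl ((\<lambda>w. var w - cst (c w)) ` (W1 \<union> W2))"
      using idl_mono[of "(\<lambda>w. var w - cst (c w)) ` W1" "(\<lambda>w. var w - cst (c w)) ` (W1 \<union> W2)"] W1
      by (meson image_mono subsetD sup_ge1 sup_ge2)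
    then have 1: "cst (q c) * (p - cst (p c)) \<in> idl ((\<lambda>w. var w - cst (c w)) ` (W1 \<union> W2))"
      by (rule idl_mult) simp
    have "q - cst (q c) \<in> idl ((\<lambda>w. var w - cst (c w)) ` (W1 \<union> W2))"
      using idl_mono[of "(\<lambda>w. var w - cst (c w)) ` W2" "(\<lambda>w. var w - cst (c w)) ` (W1 \<union> W2)"] W2
      by (meson image_mono subsetD sup_ge1 sup_ge2)
    then have 2: "p * (q - cst (q c)) \<in> idl ((\<lambda>w. var w - cst (c w)) ` (W1 \<union> W2))"
      by (rule idl_mult) (rule pf_mult(1))
    have "cst (q c) * (p - cst (p c)) + p * (q - cst (q c)) = (\<lambda>x. p x * q x) - cst ((\<lambda>x. p x * q x) c)"
      by (auto simp: fun_eq_iff fapp algebra_simps)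
    then show "(\<lambda>x. p x * q x) - cst ((\<lambda>x. p x * q x) c) \<in> idl ((\<lambda>w. var w - cst (c w)) ` (W1 \<union> W2))"
      using idl_add[OF 1 2] by metis
  qed (use W1 W2 in blast)+
qed

end


definition fscale :: "'k::field \<Rightarrow> ('a \<Rightarrow> 'k) \<Rightarrow> ('a \<Rightarrow> 'k)" where
  "fscale c f = (\<lambda>x. c * f x)"

interpretation fvs: vector_space "fscale :: 'k::field \<Rightarrow> ('a \<Rightarrow> 'k) \<Rightarrow> ('a \<Rightarrow> 'k)"
  by unfold_locales (auto simp: fscale_def fun_eq_iff fapp algebra_simps)

lemma fscale_cst: "fscale c f = cst c * f"
  by (simp add: fscale_def fun_eq_iff fapp)

lemma unit_poly:
  fixes T :: "(('x \<Rightarrow> 'k::field) \<Rightarrow> 'k) set"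
  assumes ac: "alg_closed_field TYPE('k)" and v: "v \<in> V"
    and U: "\<And>b. \<exists>u\<in>polyfuns V. 1 - u * (var v - cst b) \<in> idl V T"
    and "q \<noteq> 0" and "(\<lambda>x. poly q (x v)) \<in> idl V T"
  shows "1 \<in> idl V T"
  using assms(4,5)
proof (induction "degree q" arbitrary: q rule: less_induct)
  case less
  show ?case
  proof (cases "degree q = 0")
    case True
    then obtain c where q: "q = [:c:]" by (rule degree_eq_zeroE)
    with less have c: "c \<noteq> 0" by simp
    have "(\<lambda>x. poly q (x v)) = cst c" using q by (simp add: fun_eq_iff cst_def)
    then show ?thesis using idl_cst less(3) c by metis
  next
    case False
    then obtain b where "poly q b = 0" using ac unfolding alg_closed_field_def by auto
    then obtain q' where q: "q = [:-b,1:] * q'" using poly_eq_0_iff_dvd by (metis dvdE)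
    have q0: "q' \<noteq> 0" using less(2) q by auto
    have "degree q = degree [:-b,1:] + degree q'"
      unfolding q by (rule degree_mult_eq) (use q0 in auto)
    then have deg: "degree q' < degree q" by simp
    obtain u where u: "u \<in> polyfuns V" "1 - u * (var v - cst b) \<in> idl V T" using U by blast
    let ?P = "(\<lambda>x. poly q' (x v))"
    have P: "?P \<in> polyfuns V" by (rule pf_poly[OF v])
    have eq: "?P = ?P * (1 - u * (var v - cst b)) + u * (\<lambda>x. poly q (x v))"
      by (auto simp: fun_eq_iff fapp q algebra_simps)
    have 1: "?P * (1 - u * (var v - cst b)) \<in> idl V T" by (rule idl_mult[OF u(2) P])
    have 2: "u * (\<lambda>x. poly q (x v)) \<in> idl V T" by (rule idl_mult[OF less(3) u(1)])
    have "?P \<in> idl V T" using idl_add[OF 1 2] eq by metis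
    then show ?thesis using less(1)[OF deg q0] by blast
  qed
qed

lemma poly_part:
  fixes T :: "(('x \<Rightarrow> 'k::field) \<Rightarrow> 'k) set"
  assumes ac: "alg_closed_field TYPE('k)" and v: "v \<in> V"
    and fin: "finite A0" and a0: "a0 \<in> A0" "c a0 \<noteq> 0"
    and sum0: "\<And>x. (\<Sum>a\<in>A0. c a * U a x) = 0"
    and UR: "\<And>a. U a \<in> polyfuns V"
    and UI: "\<And>a. 1 - U a * (var v - cst a) \<in> idl V T"
  shows "1 \<in> idl V T"
proof -
  define q where "q = (\<Sum>a\<in>A0. smult (c a) (\<Prod>b\<in>A0-{a}. [:-b,1:]))"
  have pq: "poly q y = (\<Sum>a\<in>A0. c a * (\<Prod>b\<in>A0-{a}. (y - b)))" for y
    by (simp add: q_def poly_sum poly_prod)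
  have "poly q a0 = c a0 * (\<Prod>b\<in>A0-{a0}. (a0 - b))"
  proof -
    have "(\<Sum>a\<in>A0. c a * (\<Prod>b\<in>A0-{a}. (a0 - b))) = c a0 * (\<Prod>b\<in>A0-{a0}. (a0 - b))"
    proof (rule sum.delta_remove[of A0 a0 "\<lambda>a. c a * (\<Prod>b\<in>A0-{a}. (a0 - b))" "\<lambda>_. 0", simplified, OF fin] | rule trans[OF sum.remove[OF fin a0(1)]])
      have "(\<Sum>a\<in>A0-{a0}. c a * (\<Prod>b\<in>A0-{a}. (a0 - b))) = 0"
      proof (rule sum.neutral, intro ballI)
        fix a assume "a \<in> A0 - {a0}"
        then have "a0 \<in> A0 - {a}" using a0 by auto
        then have "(\<Prod>b\<in>A0-{a}. (a0 - b)) = 0" using fin by (auto intro: prod_zero)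
        then show "c a * (\<Prod>b\<in>A0-{a}. (a0 - b)) = 0" by simp
      qed
      then show "c a0 * (\<Prod>b\<in>A0-{a0}. (a0 - b)) + (\<Sum>a\<in>A0-{a0}. c a * (\<Prod>b\<in>A0-{a}. (a0 - b))) =
        c a0 * (\<Prod>b\<in>A0-{a0}. (a0 - b))" by simp
    qed
    then show ?thesis by (simp add: pq)
  qed
  moreover have "(\<Prod>b\<in>A0-{a0}. (a0 - b)) \<noteq> 0" using fin by simp
  ultimately have q0: "q \<noteq> 0" using a0 by auto
  define Q where "Q a = (\<Prod>b\<in>A0-{a}. (var v - cst b))" for a
  have QR: "Q a \<in> polyfuns V" for a unfolding Q_def using v by (intro pf_prod pf_diff) auto
  have Qx: "Q a x = (\<Prod>b\<in>A0-{a}. (x v - b))" for a x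
    by (simp add: Q_def fun_prod_apply fapp)
  have eq: "(\<lambda>x. poly q (x v)) = (\<Sum>a\<in>A0. (cst (c a) * Q a) * (1 - U a * (var v - cst a)))"
  proof (rule ext)
    fix x
    have rem: "(x v - a) * (\<Prod>b\<in>A0-{a}. (x v - b)) = (\<Prod>b\<in>A0. (x v - b))" if "a \<in> A0" for a
      using prod.remove[OF fin that, of "\<lambda>b. x v - b"] by simp
    have "(\<Sum>a\<in>A0. (cst (c a) * Q a) * (1 - U a * (var v - cst a))) x
      = (\<Sum>a\<in>A0. c a * (\<Prod>b\<in>A0-{a}. (x v - b)) - (c a * U a x) * ((x v - a) * (\<Prod>b\<in>A0-{a}. (x v - b))))"
      by (simp add: fun_sum_apply fapp Qx algebra_simps)
    also have "\<dots> = (\<Sum>a\<in>A0. c a * (\<Prod>b\<in>A0-{a}. (x v - b)) - (c a * U a x) * (\<Prod>b\<in>A0. (x v - b)))"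
      by (rule sum.cong) (auto simp: rem)
    also have "\<dots> = (\<Sum>a\<in>A0. c a * (\<Prod>b\<in>A0-{a}. (x v - b))) - (\<Sum>a\<in>A0. c a * U a x) * (\<Prod>b\<in>A0. (x v - b))"
      by (simp add: sum_subtractf sum_distrib_right)
    also have "\<dots> = poly q (x v)" using sum0[of x] by (simp add: pq)
    finally show "poly q (x v) = (\<Sum>a\<in>A0. (cst (c a) * Q a) * (1 - U a * (var v - cst a))) x" by simp
  qed
  have "(\<lambda>x. poly q (x v)) \<in> idl V T"
    unfolding eq by (intro idl_sum idl_mult UI) (use QR in auto)
  moreover have "\<exists>u\<in>polyfuns V. 1 - u * (var v - cst b) \<in> idl V T" for b using UR UI by blast
  ultimately show ?thesis using unit_poly[OF ac v _ q0] by blast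
qed



definition mons :: "'x set \<Rightarrow> (('x \<Rightarrow> 'k::field) \<Rightarrow> 'k) set" where
  "mons V = (\<lambda>vs. prod_list (map var vs)) ` lists V"

lemma mons_mult: "x \<in> mons V \<Longrightarrow> y \<in> mons V \<Longrightarrow> x * y \<in> mons V"
  unfolding mons_def
proof (elim imageE)
  fix vs ws assume "x = prod_list (map var vs)" "vs \<in> lists V" "y = prod_list (map var ws)" "ws \<in> lists V"
  then show "x * y \<in> (\<lambda>vs. prod_list (map var vs)) ` lists V"
    by (intro image_eqI[of _ _ "vs @ ws"]) auto
qed

lemma mons_one: "1 \<in> mons V"
  unfolding mons_def by (intro image_eqI[of _ _ "[]"]) auto

lemma mons_var: "v \<in> V \<Longrightarrow> var v \<in> mons V"
  unfolding mons_def by (intro image_eqI[of _ _ "[v]"]) auto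

lemma mons_countable: "countable V \<Longrightarrow> countable (mons V)"
  unfolding mons_def by auto

lemma span_mult1:
  assumes x: "x \<in> mons V" and y: "y \<in> fvs.span (mons V)"
  shows "x * y \<in> fvs.span (mons V)"
  using y
proof (induction rule: fvs.span_induct)
  case base
  show ?case
  proof (rule fvs.subspaceI)
    show "0 \<in> {y. x * y \<in> fvs.span (mons V)}" by (simp add: fvs.span_zero)
    show "y + z \<in> {y. x * y \<in> fvs.span (mons V)}" if "y \<in> {y. x * y \<in> fvs.span (mons V)}"
      "z \<in> {y. x * y \<in> fvs.span (mons V)}" for y z
      using that fvs.span_add by (auto simp: distrib_left)
    show "fscale c y \<in> {y. x * y \<in> fvs.span (mons V)}" if "y \<in> {y. x * y \<in> fvs.span (mons V)}" for c y
    proof -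
      have "x * fscale c y = fscale c (x * y)" by (simp add: fscale_def fun_eq_iff fapp algebra_simps)
      then show ?thesis using that fvs.span_scale by auto
    qed
  qed
next
  case (step z)
  then show ?case using mons_mult[OF x] fvs.span_base by blast
qed

lemma span_mult:
  assumes x: "x \<in> fvs.span (mons V)" and y: "y \<in> fvs.span (mons V)"
  shows "x * y \<in> fvs.span (mons V)"
  using x
proof (induction rule: fvs.span_induct)
  case base
  show ?case
  proof (rule fvs.subspaceI)
    show "0 \<in> {x. x * y \<in> fvs.span (mons V)}" by (simp add: fvs.span_zero)
    show "x + z \<in> {x. x * y \<in> fvs.span (mons V)}" if "x \<in> {x. x * y \<in> fvs.span (mons V)}"
      "z \<in> {x. x * y \<in> fvs.span (mons V)}" for x z
      using that fvs.span_add by (auto simp: distrib_right)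
    show "fscale c x \<in> {x. x * y \<in> fvs.span (mons V)}" if "x \<in> {x. x * y \<in> fvs.span (mons V)}" for c x
    proof -
      have "fscale c x * y = fscale c (x * y)" by (simp add: fscale_def fun_eq_iff fapp algebra_simps)
      then show ?thesis using that fvs.span_scale by auto
    qed
  qed
next
  case (step z)
  then show ?case using span_mult1[OF _ y] by blast
qed

lemma pf_span: "p \<in> polyfuns V \<Longrightarrow> p \<in> fvs.span (mons V)"
proof (induction p rule: polyfuns.induct)
  case (pf_const c)
  have "(\<lambda>_. c) = fscale c 1" by (simp add: fscale_def fun_eq_iff fapp)
  then show ?case using fvs.span_scale[OF fvs.span_base[OF mons_one]] by metis
next
  case (pf_var v)
  then show ?case using fvs.span_base[OF mons_var[OF pf_var]] by (simp add: var_def)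
next
  case (pf_add p q)
  then show ?case using fvs.span_add[of p _ q] by (simp add: plus_fun_def)
next
  case (pf_mult p q)
  then show ?case using span_mult[of p V q] by (simp add: times_fun_def)
qed

lemma span_finite_sub:
  assumes "x \<in> fvs.span S"
  shows "\<exists>F. finite F \<and> F \<subseteq> S \<and> x \<in> fvs.span F"
proof -
  from assms obtain t r where t: "x = (\<Sum>a\<in>t. fscale (r a) a)" "finite t" "t \<subseteq> S"
    unfolding fvs.span_explicit by blast
  have "x \<in> fvs.span t" unfolding t(1)
    by (intro fvs.span_sum fvs.span_scale fvs.span_base)
  then show ?thesis using t by blast
qed

lemma finite_range_bound:
  fixes e :: "nat \<Rightarrow> 'a"
  assumes "finite F" "F \<subseteq> range e"
  shows "\<exists>n. F \<subseteq> e ` {..<n}"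
  using assms
proof (induction F rule: finite_induct)
  case empty then show ?case by auto
next
  case (insert x F)
  then obtain n where n: "F \<subseteq> e ` {..<n}" by auto
  obtain k where k: "x = e k" using insert by auto
  have "insert x F \<subseteq> e ` {..<max n (Suc k)}" using n k by auto
  then show ?case by blast
qed



lemma step_exists:
  fixes T :: "(('x \<Rightarrow> 'k::field) \<Rightarrow> 'k) set"
  assumes unc: "uncountable (UNIV::'k set)" and ac: "alg_closed_field TYPE('k)"
    and cV: "countable V" and v: "v \<in> V"
    and prp: "1 \<notin> idl V T"
  shows "\<exists>a. 1 \<notin> idl V (insert (var v - cst a) T)"
proof (rule ccontr)
  assume "\<not> ?thesis"
  then have "\<forall>a. \<exists>u\<in>polyfuns V. 1 - u * (var v - cst a) \<in> idl V T"
  proof (intro allI)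
    fix a
    assume "\<not> (\<exists>a. 1 \<notin> idl V (insert (var v - cst a) T))"
    then have "1 \<in> idl V (insert (var v - cst a) T)" by blast
    then obtain i r where "i \<in> idl V T" "r \<in> polyfuns V" "1 = i + r * (var v - cst a)"
      using idl_insert by blast
    then show "\<exists>u\<in>polyfuns V. 1 - u * (var v - cst a) \<in> idl V T"
      by (intro bexI[of _ r]) (auto simp: algebra_simps)
  qed
  then obtain U where UR: "\<And>a. U a \<in> polyfuns V" and UI: "\<And>a. 1 - U a * (var v - cst a) \<in> idl V T"
    by metis
  have injU: "inj U"
  proof (rule injI, rule ccontr)
    fix a b assume eq: "U a = U b" and ab: "a \<noteq> b"
    have "(1 - U a * (var v - cst a)) - (1 - U b * (var v - cst b)) \<in> idl V T"
      by (rule idl_diff[OF UI UI])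
    moreover have "(1 - U a * (var v - cst a)) - (1 - U b * (var v - cst b)) = cst (a - b) * U a"
      using eq by (simp add: fun_eq_iff fapp algebra_simps)
    ultimately have "cst (a - b) * U a \<in> idl V T" by simp
    then have "cst (1 / (a - b)) * (cst (a - b) * U a) \<in> idl V T" by (rule idl_mult) simp
    moreover have "cst (1 / (a - b)) * (cst (a - b) * U a) = U a" using ab
      by (simp add: fun_eq_iff fapp)
    ultimately have "U a \<in> idl V T" by simp
    then have "(var v - cst a) * U a \<in> idl V T" by (rule idl_mult) (use v in auto)
    then have "(1 - U a * (var v - cst a)) + (var v - cst a) * U a \<in> idl V T"
      by (rule idl_add[OF UI])
    then show False using prp by (simp add: algebra_simps)
  qed
  define e where "e = from_nat_into (mons V :: (('x \<Rightarrow> 'k) \<Rightarrow> 'k) set)"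
  have rng: "range e = mons V" unfolding e_def
    using mons_countable[OF cV] mons_one[of V] by (intro range_from_nat_into) auto
  have "\<exists>n. U a \<in> fvs.span (e ` {..<n})" for a
  proof -
    obtain F where F: "finite F" "F \<subseteq> mons V" "U a \<in> fvs.span F"
      using span_finite_sub[OF pf_span[OF UR]] by blast
    then obtain n where "F \<subseteq> e ` {..<n}" using finite_range_bound[of F e] rng by auto
    then show ?thesis using F fvs.span_mono by blast
  qed
  then obtain N where N: "\<And>a. U a \<in> fvs.span (e ` {..<N a})" by metis
  have "\<exists>n. infinite {a. N a = n}"
  proof (rule ccontr)
    assume "\<not> ?thesis"
    then have "countable (\<Union>n. {a. N a = n})" by (intro countable_UN) (auto intro: countable_finite)
    moreover have "(\<Union>n. {a. N a = n}) = UNIV" by auto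
    ultimately show False using unc by simp
  qed
  then obtain n where n: "infinite {a. N a = n}" by blast
  let ?S = "U ` {a. N a = n}"
  have Sinf: "infinite ?S" using n injU by (simp add: finite_image_iff inj_on_subset)
  have Ssub: "?S \<subseteq> fvs.span (e ` {..<n})" using N by auto
  have "fvs.dependent ?S"
    using fvs.independent_span_bound[OF _ _ Ssub] Sinf by auto
  then obtain t w where t: "finite t" "t \<subseteq> ?S" "(\<Sum>f\<in>t. fscale (w f) f) = 0" and f0: "\<exists>f\<in>t. w f \<noteq> 0"
    unfolding fvs.dependent_explicit by blast
  define A0 where "A0 = {a. U a \<in> t}"
  have tA: "t = U ` A0" using t(2) unfolding A0_def by auto
  have finA: "finite A0" unfolding A0_def using finite_vimageI[OF t(1) injU] by (simp add: vimage_def)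
  obtain a0 where a0: "a0 \<in> A0" "w (U a0) \<noteq> 0" using f0 tA by auto
  have "(\<Sum>a\<in>A0. fscale (w (U a)) (U a)) = 0"
    using t(3) unfolding tA by (subst (asm) sum.reindex) (use injU in \<open>auto intro: inj_on_subset\<close>)
  then have sum0: "(\<Sum>a\<in>A0. w (U a) * U a x) = 0" for x
  proof -
    assume h: "(\<Sum>a\<in>A0. fscale (w (U a)) (U a)) = 0"
    have "(\<Sum>a\<in>A0. fscale (w (U a)) (U a)) x = 0" by (simp add: h fapp)
    then show ?thesis by (simp add: fun_sum_apply fscale_def)
  qed
  have "1 \<in> idl V T"
    by (rule poly_part[OF ac v finA a0 sum0 UR UI])
  then show False using prp by simp
qed



definition step_val :: "'x set \<Rightarrow> (('x \<Rightarrow> 'k::field) \<Rightarrow> 'k) set \<Rightarrow> 'x \<Rightarrow> 'k" where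
  "step_val V T v = (SOME a. 1 \<notin> idl V (insert (var v - cst a) T))"

primrec seqT :: "'x set \<Rightarrow> (('x \<Rightarrow> 'k::field) \<Rightarrow> 'k) set \<Rightarrow> (nat \<Rightarrow> 'x) \<Rightarrow> nat \<Rightarrow> (('x \<Rightarrow> 'k) \<Rightarrow> 'k) set" where
  "seqT V S e 0 = S"
| "seqT V S e (Suc n) = (if e n \<in> V then insert (var (e n) - cst (step_val V (seqT V S e n) (e n))) (seqT V S e n)
     else seqT V S e n)"

lemma seqT_proper:
  fixes S :: "(('x \<Rightarrow> 'k::field) \<Rightarrow> 'k) set"
  assumes unc: "uncountable (UNIV::'k set)" and ac: "alg_closed_field TYPE('k)"
    and cV: "countable V" and pr: "1 \<notin> idl V S"
  shows "1 \<notin> idl V (seqT V S e n)"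
proof (induction n)
  case 0 then show ?case using pr by simp
next
  case (Suc n)
  show ?case
  proof (cases "e n \<in> V")
    case True
    have "\<exists>a. 1 \<notin> idl V (insert (var (e n) - cst a) (seqT V S e n))"
      by (rule step_exists[OF unc ac cV True Suc])
    then have "1 \<notin> idl V (insert (var (e n) - cst (step_val V (seqT V S e n) (e n))) (seqT V S e n))"
      unfolding step_val_def by (rule someI_ex)
    then show ?thesis using True by simp
  next
    case False then show ?thesis using Suc by simp
  qed
qed

lemma seqT_mono: "m \<le> n \<Longrightarrow> seqT V S e m \<subseteq> seqT V S e n"
  by (rule lift_Suc_mono_le[of "seqT V S e"]) auto

theorem poly_compact:
  fixes S :: "(('x \<Rightarrow> 'k::field) \<Rightarrow> 'k) set"
  assumes unc: "uncountable (UNIV::'k set)" and ac: "alg_closed_field TYPE('k)"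
    and cV: "countable V" and SR: "S \<subseteq> polyfuns V"
    and fs: "\<And>F. finite F \<Longrightarrow> F \<subseteq> S \<Longrightarrow> \<exists>c. \<forall>p\<in>F. p c = 0"
  shows "\<exists>c. \<forall>p\<in>S. p c = 0"
proof -
  have pr: "1 \<notin> idl V S"
  proof
    assume one: "1 \<in> idl V S"
    obtain F where F: "finite F" "F \<subseteq> S" "\<forall>c. (\<forall>t\<in>F. t c = 0) \<longrightarrow> (1::('x \<Rightarrow> 'k) \<Rightarrow> 'k) c = 0"
      using idl_finite[OF one] by (elim exE conjE)
    obtain c where c: "\<forall>p\<in>F. p c = 0" using fs[OF F(1,2)] by (elim exE)
    have "(1::('x \<Rightarrow> 'k) \<Rightarrow> 'k) c = 0" using spec[OF F(3), of c] c by (rule mp)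
    then show False by (simp add: fapp)
  qed
  define e where "e = from_nat_into V"
  define L where "L w = (LEAST n. e n = w)" for w
  define c where "c w = step_val V (seqT V S e (L w)) w" for w
  have key: "var w - cst (c w) \<in> seqT V S e (Suc (L w))" if w: "w \<in> V" for w
  proof -
    have "\<exists>n. e n = w" unfolding e_def using from_nat_into_surj[OF cV w] .
    then have ew: "e (L w) = w" unfolding L_def by (rule LeastI_ex)
    have "seqT V S e (Suc (L w)) = insert (var (e (L w)) - cst (step_val V (seqT V S e (L w)) (e (L w)))) (seqT V S e (L w))"
      using w ew by (simp only: seqT.simps if_True)
    then show ?thesis unfolding c_def using ew by simp
  qed
  show ?thesis
  proof (intro exI[of _ c] ballI)
    fix p assume p: "p \<in> S"
    obtain W where W: "finite W" "W \<subseteq> V"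
      "p - cst (p c) \<in> idl V ((\<lambda>w. var w - cst (c w)) ` W)"
      using taylor[of p V] SR p by blast
    have "finite ((\<lambda>w. Suc (L w)) ` W)" using W(1) by simp
    then obtain n where n: "\<forall>k\<in>(\<lambda>w. Suc (L w)) ` W. k \<le> n"
      using finite_nat_set_iff_bounded_le by blast
    have sub: "(\<lambda>w. var w - cst (c w)) ` W \<subseteq> seqT V S e n"
    proof
      fix g assume "g \<in> (\<lambda>w. var w - cst (c w)) ` W"
      then obtain w where w: "w \<in> W" "g = var w - cst (c w)" by blast
      have "Suc (L w) \<le> n" using n w(1) by blast
      then have "seqT V S e (Suc (L w)) \<subseteq> seqT V S e n" by (rule seqT_mono)
      moreover have "w \<in> V" using W(2) w(1) by blast
      ultimately show "g \<in> seqT V S e n" using key[of w] w(2) by blast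
    qed
    have 1: "p - cst (p c) \<in> idl V (seqT V S e n)" by (rule subsetD[OF idl_mono[OF sub] W(3)])
    have "p \<in> seqT V S e n" using p seqT_mono[of 0 n V S e] by auto
    then have 2: "p \<in> idl V (seqT V S e n)" by (rule idl_in)
    have "p - (p - cst (p c)) \<in> idl V (seqT V S e n)" by (rule idl_diff[OF 2 1])
    then have 3: "cst (p c) \<in> idl V (seqT V S e n)" by simp
    show "p c = 0"
    proof (rule ccontr)
      assume "p c \<noteq> 0"
      then have "1 \<in> idl V (seqT V S e n)" using idl_cst[OF 3] by blast
      then show False using seqT_proper[OF unc ac cV pr] by blast
    qed
  qed
qed



lemma pf_local: "p \<in> polyfuns W \<Longrightarrow> (\<forall>w\<in>W. a w = b w) \<Longrightarrow> p a = p b"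
  by (induction p rule: polyfuns.induct) auto

lemma pf_subst:
  assumes "p \<in> polyfuns W" "\<forall>w\<in>W. \<sigma> w \<in> V"
  shows "(\<lambda>X. p (\<lambda>w. X (\<sigma> w))) \<in> (polyfuns V :: (('y \<Rightarrow> 'k::field) \<Rightarrow> 'k) set)"
  using assms
proof (induction p rule: polyfuns.induct)
  case (pf_const c) show ?case by (rule polyfuns.pf_const)
next
  case (pf_var w) then show ?case by (simp add: polyfuns.pf_var)
next
  case (pf_add p q) then show ?case using polyfuns.pf_add by fastforce
next
  case (pf_mult p q) then show ?case using polyfuns.pf_mult by fastforce
qed

lemma finite_UN_cover:
  assumes "finite F" "F \<subseteq> (\<Union>i\<in>I. B i)"
  shows "\<exists>J. finite J \<and> J \<subseteq> I \<and> F \<subseteq> (\<Union>i\<in>J. B i)"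
  using assms
proof (induction F rule: finite_induct)
  case empty then show ?case by (intro exI[of _ "{}"]) auto
next
  case (insert x F)
  then obtain J where J: "finite J" "J \<subseteq> I" "F \<subseteq> (\<Union>i\<in>J. B i)" by auto
  from insert obtain i where "i \<in> I" "x \<in> B i" by auto
  with J show ?case by (intro exI[of _ "insert i J"]) auto
qed

definition genH :: "'g::group_add set \<Rightarrow> 'g set" where
  "genH M = (\<lambda>l. foldl (+) 0 l) ` lists (M \<union> uminus ` M)"

lemma genH_0: "0 \<in> genH M"
  unfolding genH_def by (intro image_eqI[of _ _ "[]"]) auto

lemma genH_add: "h \<in> genH M \<Longrightarrow> m \<in> M \<Longrightarrow> h + m \<in> genH M"
  unfolding genH_def by (auto intro!: image_eqI[of _ _ "_ @ [m]"])

lemma genH_diff: "h \<in> genH M \<Longrightarrow> m \<in> M \<Longrightarrow> h + - m \<in> genH M"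
  unfolding genH_def by (auto intro!: image_eqI[of _ _ "_ @ [- m]"])

lemma genH_back: "h + m \<in> genH M \<Longrightarrow> m \<in> M \<Longrightarrow> h \<in> genH M"
  using genH_diff[of "h + m" M m] by (simp add: add.assoc)

lemma genH_countable: "finite M \<Longrightarrow> countable (genH M)"
  unfolding genH_def by (intro countable_image countable_lists) (auto intro: countable_finite)

lemma shift_shift: "shift a (shift b x) = shift (a + b) x"
  by (simp only: shift_def minus_add add.assoc)

lemma shift_configs: "x \<in> configs A \<Longrightarrow> shift g x \<in> configs A"
  by (simp add: configs_def shift_def)

lemma ca_equivariant:
  assumes ca: "ca_local A M \<mu> \<tau>" and x: "x \<in> configs A"
  shows "\<tau> (shift k x) = shift k (\<tau> x)"
proof
  fix h
  have "\<tau> (shift k x) h = \<mu> (restrict (shift (- h) (shift k x)) M)"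
    using ca shift_configs[OF x] unfolding ca_local_def by blast
  also have "shift (- h) (shift k x) = shift (- (- k + h)) x"
    by (simp add: shift_shift minus_add)
  also have "\<mu> (restrict (shift (- (- k + h)) x) M) = \<tau> x (- k + h)"
    using ca x unfolding ca_local_def by simp
  also have "\<dots> = shift k (\<tau> x) h" by (simp add: shift_def)
  finally show "\<tau> (shift k x) h = shift k (\<tau> x) h" .
qed



lemma restrict_shift_PiE: "x \<in> configs A \<Longrightarrow> restrict (shift g x) M \<in> M \<rightarrow>\<^sub>E A"
  by (auto simp: configs_def shift_def)

lemma inverse_local:
  fixes A :: "('v::finite \<Rightarrow> 'k::field) set"
    and \<tau> :: "('g::group_add \<Rightarrow> 'v \<Rightarrow> 'k) \<Rightarrow> ('g \<Rightarrow> 'v \<Rightarrow> 'k)"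
    and P :: "'v \<Rightarrow> (('g \<times> 'v) \<Rightarrow> 'k) \<Rightarrow> 'k"
  assumes unc: "uncountable (UNIV :: 'k set)" and ac: "alg_closed_field TYPE('k)"
    and SAR: "SA \<subseteq> polyfuns UNIV" and SAA: "A = {x. \<forall>p\<in>SA. p x = 0}"
    and ca: "ca_local A M \<mu> \<tau>"
    and PR: "\<And>w. P w \<in> polyfuns (M \<times> UNIV)"
    and Pmu: "\<And>w p. p \<in> M \<rightarrow>\<^sub>E A \<Longrightarrow> \<mu> p w = P w (\<lambda>(h, w'). p h w')"
    and inj: "inj_on \<tau> (configs A)"
  shows "\<exists>N. finite N \<and> (\<forall>x\<in>configs A. \<forall>y\<in>configs A. (\<forall>h\<in>N. \<tau> x h = \<tau> y h) \<longrightarrow> x 0 = y 0)"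
proof (rule ccontr)
  assume contra: "\<not> ?thesis"
  have bad: "\<exists>x\<in>configs A. \<exists>y\<in>configs A. (\<forall>h\<in>N. \<tau> x h = \<tau> y h) \<and> x 0 \<noteq> y 0" if "finite N" for N
    using contra that by blast
  have finM: "finite M" using ca by (simp add: ca_local_def)
  have tau: "\<tau> x g = \<mu> (restrict (shift (- g) x) M)" if "x \<in> configs A" for x g
    using ca that unfolding ca_local_def by blast
  have tauP: "\<tau> x g w = P w (\<lambda>mu. x (g + fst mu) (snd mu))" if x: "x \<in> configs A" for x g w
  proof -
    have "\<tau> x g w = P w (\<lambda>(h, w'). restrict (shift (- g) x) M h w')"
      using tau[OF x] Pmu[OF restrict_shift_PiE[OF x]] by simp
    also have "\<dots> = P w (\<lambda>mu. x (g + fst mu) (snd mu))"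
      by (rule pf_local[OF PR]) (auto simp: shift_def)
    finally show ?thesis .
  qed
  define H where "H = genH M"
  have H0: "0 \<in> H" unfolding H_def by (rule genH_0)
  have Hadd: "h + m \<in> H" if "h \<in> H" "m \<in> M" for h m using that genH_add unfolding H_def by blast
  have Hback: "h \<in> H" if "h + m \<in> H" "m \<in> M" for h m using that genH_back unfolding H_def by blast
  define V :: "(('g \<times> 'v \<times> bool) + 'v) set" where "V = Inl ` (H \<times> UNIV \<times> UNIV) \<union> range Inr"
  have cH: "countable H" unfolding H_def by (rule genH_countable[OF finM])
  have cV: "countable V" unfolding V_def using cH by (auto intro: countable_SIGMA)
  define g1 :: "'g \<Rightarrow> bool \<Rightarrow> (('v \<Rightarrow> 'k) \<Rightarrow> 'k) \<Rightarrow> ((('g \<times> 'v \<times> bool) + 'v) \<Rightarrow> 'k) \<Rightarrow> 'k"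
    where "g1 h b p = (\<lambda>X. p (\<lambda>w. X (Inl (h, w, b))))" for h b p
  define g2 :: "'g \<Rightarrow> 'v \<Rightarrow> ((('g \<times> 'v \<times> bool) + 'v) \<Rightarrow> 'k) \<Rightarrow> 'k"
    where "g2 h w = (\<lambda>X. P w (\<lambda>mu. X (Inl (h + fst mu, snd mu, True))) - P w (\<lambda>mu. X (Inl (h + fst mu, snd mu, False))))" for h w
  define ineq :: "((('g \<times> 'v \<times> bool) + 'v) \<Rightarrow> 'k) \<Rightarrow> 'k"
    where "ineq = (\<lambda>X. (\<Sum>w\<in>UNIV. X (Inr w) * (X (Inl (0, w, True)) - X (Inl (0, w, False)))) - 1)"
  define Sig where "Sig h = {g1 h b p | b p. p \<in> SA} \<union> range (g2 h)" for h
  define Sys where "Sys = insert ineq (\<Union>h\<in>H. Sig h)"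
  have SysR: "Sys \<subseteq> polyfuns V"
  proof
    fix p assume "p \<in> Sys"
    then consider "p = ineq" | h b q where "h \<in> H" "q \<in> SA" "p = g1 h b q" | h w where "h \<in> H" "p = g2 h w"
      unfolding Sys_def Sig_def by blast
    then show "p \<in> polyfuns V"
    proof cases
      case 1
      have "ineq = (\<Sum>w\<in>UNIV. var (Inr w) * (var (Inl (0, w, True)) - var (Inl (0, w, False)))) - 1"
        by (simp add: ineq_def fun_eq_iff fapp fun_sum_apply)
      moreover have "(\<Sum>w\<in>UNIV. var (Inr w) * (var (Inl (0, w, True)) - var (Inl (0, w, False)))) - 1 \<in> polyfuns V"
        using H0 by (intro pf_diff pf_sum pf_mult' pf_var' pf_one) (auto simp: V_def)
      ultimately show ?thesis using 1 by simp
    next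
      case (2 h b q)
      have "(\<lambda>X. q (\<lambda>w. X (Inl (h, w, b)))) \<in> polyfuns V"
        by (rule pf_subst[of q UNIV]) (use 2 SAR in \<open>auto simp: V_def\<close>)
      then show ?thesis using 2 by (simp add: g1_def)
    next
      case (3 h w)
      have T: "(\<lambda>X. P w (\<lambda>mu. X (Inl (h + fst mu, snd mu, b)))) \<in> polyfuns V" for b
        by (rule pf_subst[OF PR]) (use 3 Hadd in \<open>auto simp: V_def\<close>)
      have "g2 h w = (\<lambda>X. P w (\<lambda>mu. X (Inl (h + fst mu, snd mu, True)))) - (\<lambda>X. P w (\<lambda>mu. X (Inl (h + fst mu, snd mu, False))))"
        by (simp add: g2_def fun_eq_iff fapp)
      then show ?thesis using 3 pf_diff[OF T T] by simp
    qed
  qed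
  have fin_sat: "\<exists>c. \<forall>p\<in>F. p c = 0" if F: "finite F" "F \<subseteq> Sys" for F
  proof -
    have "F - {ineq} \<subseteq> (\<Union>h\<in>H. Sig h)" using F(2) unfolding Sys_def by auto
    then obtain N where N: "finite N" "N \<subseteq> H" "F - {ineq} \<subseteq> (\<Union>h\<in>N. Sig h)"
      using finite_UN_cover[of "F - {ineq}" Sig H] F(1) by blast
    obtain x y where xy: "x \<in> configs A" "y \<in> configs A" "\<forall>h\<in>N. \<tau> x h = \<tau> y h" "x 0 \<noteq> y 0"
      using bad[OF N(1)] by blast
    obtain w0 where w0: "x 0 w0 \<noteq> y 0 w0" using xy(4) by (auto simp: fun_eq_iff)
    define X where "X = (\<lambda>z. case z of Inl (g, w, b) \<Rightarrow> (if b then x g w else y g w)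
       | Inr w \<Rightarrow> (if w = w0 then 1 / (x 0 w0 - y 0 w0) else 0))"
    show ?thesis
    proof (intro exI[of _ X] ballI)
      fix p assume pF: "p \<in> F"
      show "p X = 0"
      proof (cases "p = ineq")
        case True
        have t: "X (Inr w) * (X (Inl (0, w, True)) - X (Inl (0, w, False))) = (if w = w0 then 1 else 0)" for w
          using w0 by (simp add: X_def)
        show ?thesis unfolding True ineq_def t by simp
      next
        case False
        then obtain h where h: "h \<in> N" "p \<in> Sig h" using N(3) pF by blast
        then consider (a) b q where "q \<in> SA" "p = g1 h b q" | (b) w where "p = g2 h w"
          unfolding Sig_def by blast
        then show ?thesis
        proof cases
          case a
          have "(\<lambda>w. X (Inl (h, w, b))) = (if b then x h else y h)" by (simp add: X_def fun_eq_iff)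
          moreover have "x h \<in> A" "y h \<in> A" using xy(1,2) by (auto simp: configs_def)
          ultimately show ?thesis using a SAA by (auto simp: g1_def)
        next
          case b
          have "P w (\<lambda>mu. X (Inl (h + fst mu, snd mu, True))) = \<tau> x h w"
            using tauP[OF xy(1)] by (simp add: X_def)
          moreover have "P w (\<lambda>mu. X (Inl (h + fst mu, snd mu, False))) = \<tau> y h w"
            using tauP[OF xy(2)] by (simp add: X_def)
          ultimately show ?thesis using b xy(3) h(1) by (simp add: g2_def)
        qed
      qed
    qed
  qed
  obtain c where c: "\<forall>p\<in>Sys. p c = 0" using poly_compact[OF unc ac cV SysR fin_sat] by blast
  define xc where "xc b g = (if g \<in> H then (\<lambda>w. c (Inl (g, w, b))) else (\<lambda>w. c (Inl (0, w, True))))" for b g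
  have inA: "(\<lambda>w. c (Inl (g, w, b))) \<in> A" if "g \<in> H" for g b
  proof -
    have "q (\<lambda>w. c (Inl (g, w, b))) = 0" if "q \<in> SA" for q
    proof -
      have "g1 g b q \<in> Sys" unfolding Sys_def Sig_def using \<open>g \<in> H\<close> that by blast
      then have "g1 g b q c = 0" using c by blast
      then show ?thesis by (simp add: g1_def)
    qed
    then show ?thesis using SAA by blast
  qed
  have conf: "xc b \<in> configs A" for b
    unfolding configs_def xc_def using inA H0 by auto
  have xcH: "xc b g = (\<lambda>w. c (Inl (g, w, b)))" if "g \<in> H" for b g
    using that by (simp add: xc_def)
  have eqtau: "\<tau> (xc True) = \<tau> (xc False)"
  proof (rule ext)
    fix g
    show "\<tau> (xc True) g = \<tau> (xc False) g"
    proof (cases "g \<in> H")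
      case True
      show ?thesis
      proof (rule ext)
        fix w
        have e: "P w (\<lambda>mu. xc b (g + fst mu) (snd mu)) = P w (\<lambda>mu. c (Inl (g + fst mu, snd mu, b)))" for b
          by (rule pf_local[OF PR]) (auto simp: xcH Hadd[OF True])
        have "g2 g w \<in> Sys" unfolding Sys_def Sig_def using True by blast
        then have "g2 g w c = 0" using c by blast
        then show "\<tau> (xc True) g w = \<tau> (xc False) g w"
          using tauP[OF conf] e by (simp add: g2_def)
      qed
    next
      case False
      have "restrict (shift (- g) (xc True)) M = restrict (shift (- g) (xc False)) M"
      proof (rule ext)
        fix m
        show "restrict (shift (- g) (xc True)) M m = restrict (shift (- g) (xc False)) M m"
        proof (cases "m \<in> M")
          case True
          then have "g + m \<notin> H" using False Hback by blast
          then show ?thesis using True by (simp add: shift_def xc_def)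
        qed simp
      qed
      then show ?thesis using tau[OF conf] by simp
    qed
  qed
  have neq: "xc True \<noteq> xc False"
  proof
    assume eq: "xc True = xc False"
    have "ineq c = 0" using c unfolding Sys_def by blast
    moreover have "c (Inl (0, w, True)) = c (Inl (0, w, False))" for w
      using fun_cong[OF fun_cong[OF eq, of 0], of w] by (simp add: xcH[OF H0])
    ultimately show False by (simp add: ineq_def)
  qed
  then show False using inj conf eqtau unfolding inj_on_def by blast
qed



theorem theorem1p3:
  fixes A :: "('v::finite \<Rightarrow> 'k::field) set"
    and \<tau> :: "('g::group_add \<Rightarrow> 'v \<Rightarrow> 'k) \<Rightarrow> ('g \<Rightarrow> 'v \<Rightarrow> 'k)"
  assumes "uncountable (UNIV :: 'k set)"
    and "alg_closed_field TYPE('k)"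
    and "affine_algebraic_set A"
    and "algebraic_ca A \<tau>"
    and "bij_betw \<tau> (configs A) (configs A)"
  shows "reversible_ca A \<tau>"
proof -
  from assms(3) obtain SA where SAR: "SA \<subseteq> polyfuns UNIV" and SAA: "A = {x. \<forall>p\<in>SA. p x = 0}"
    unfolding affine_algebraic_set_def by blast
  from assms(4) obtain M \<mu> where ca: "ca_local A M \<mu> \<tau>" and reg: "regular_local A M \<mu>"
    unfolding algebraic_ca_def by blast
  from reg have "\<forall>w. \<exists>P\<in>polyfuns (M \<times> UNIV). \<forall>p\<in>M \<rightarrow>\<^sub>E A. \<mu> p w = P (\<lambda>(h, w). p h w)"
    unfolding regular_local_def .
  then obtain P where PR: "\<And>w. P w \<in> polyfuns (M \<times> UNIV)"
    and Pmu: "\<And>w p. p \<in> M \<rightarrow>\<^sub>E A \<Longrightarrow> \<mu> p w = P w (\<lambda>(h, w'). p h w')" by metis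
  have inj: "inj_on \<tau> (configs A)" using assms(5) bij_betw_def by blast
  obtain N where N: "finite N" "\<forall>x\<in>configs A. \<forall>y\<in>configs A. (\<forall>h\<in>N. \<tau> x h = \<tau> y h) \<longrightarrow> x 0 = y 0"
    using inverse_local[OF assms(1,2) SAR SAA ca PR Pmu inj] by blast
  define N0 where "N0 = insert 0 N"
  define \<sigma> where "\<sigma> = the_inv_into (configs A) \<tau>"
  define \<nu> where "\<nu> p = (if \<exists>x. x \<in> configs A \<and> restrict (\<tau> x) N0 = p
      then (SOME x. x \<in> configs A \<and> restrict (\<tau> x) N0 = p) 0 else (SOME a. a \<in> A))" for p
  have "ca_local A N0 \<nu> \<sigma>"
    unfolding ca_local_def
  proof (intro conjI ballI allI)
    show "finite N0" using N(1) by (simp add: N0_def)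
  next
    fix p assume p: "p \<in> N0 \<rightarrow>\<^sub>E A"
    show "\<nu> p \<in> A"
    proof (cases "\<exists>x. x \<in> configs A \<and> restrict (\<tau> x) N0 = p")
      case True
      then have "(SOME x. x \<in> configs A \<and> restrict (\<tau> x) N0 = p) \<in> configs A \<and>
          restrict (\<tau> (SOME x. x \<in> configs A \<and> restrict (\<tau> x) N0 = p)) N0 = p" by (rule someI_ex)
      then show ?thesis using True by (simp add: \<nu>_def configs_def)
    next
      case False
      have "p 0 \<in> A" using p by (auto simp: N0_def)
      then have "(SOME a. a \<in> A) \<in> A" by (rule someI[of "\<lambda>a. a \<in> A"])
      moreover have "\<nu> p = (SOME a. a \<in> A)" using False unfolding \<nu>_def by (simp only: if_False)
      ultimately show ?thesis by simp
    qed
  next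
    fix y :: "'g \<Rightarrow> 'v \<Rightarrow> 'k" and g :: 'g
    assume y: "y \<in> configs A"
    have x: "\<sigma> y \<in> configs A" unfolding \<sigma>_def
      using assms(5) y by (metis bij_betw_def the_inv_into_into order_refl)
    have tx: "\<tau> (\<sigma> y) = y" unfolding \<sigma>_def using assms(5) y by (simp add: f_the_inv_into_f_bij_betw)
    let ?z = "shift (- g) (\<sigma> y)"
    have zc: "?z \<in> configs A" by (rule shift_configs[OF x])
    have tz: "\<tau> ?z = shift (- g) y" using ca_equivariant[OF ca x] tx by simp
    have ex: "\<exists>x. x \<in> configs A \<and> restrict (\<tau> x) N0 = restrict (shift (- g) y) N0"
      using zc tz by auto
    define x' where "x' = (SOME x. x \<in> configs A \<and> restrict (\<tau> x) N0 = restrict (shift (- g) y) N0)"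
    have x': "x' \<in> configs A \<and> restrict (\<tau> x') N0 = restrict (shift (- g) y) N0"
      unfolding x'_def by (rule someI_ex[OF ex])
    have nu: "\<nu> (restrict (shift (- g) y) N0) = x' 0" using ex by (simp add: \<nu>_def x'_def)
    have "\<forall>h\<in>N. \<tau> x' h = \<tau> ?z h"
    proof
      fix h assume "h \<in> N"
      then have "h \<in> N0" by (simp add: N0_def)
      then show "\<tau> x' h = \<tau> ?z h" using x' tz by (metis restrict_apply')
    qed
    then have "x' 0 = ?z 0" using N(2) x' zc by blast
    also have "?z 0 = \<sigma> y g" by (simp add: shift_def)
    finally show "\<sigma> y g = \<nu> (restrict (shift (- g) y) N0)" using nu by simp
  qed
  then show ?thesis unfolding reversible_ca_def cellular_automaton_def \<sigma>_def using assms(5) by blast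
qed


end
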